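(* Let $(\mathcal{C},\Delta,\epsilon)$ be a finite-dimensional coalgebra over $\mathbb{C}$, let $V_1,V_2,\dots$ be finite-dimensional complex vector spaces and $\phi_i:\mathcal{C}\to V_i$ ($i=1,2,\dots$) linear maps. Let $W$ be a finite-dimensional complex vector space and $\psi:\mathcal{C}^*\to\mathrm{End}(W)$ an injective representation of the algebra $\mathcal{C}^*$. Let $B$ be a basis of $\mathcal{C}$ with dual basis $\{\delta_x\}_{x\in B}$ of $\mathcal{C}^*$, and define $A_i=\sum_{x\in B}\phi_i(x)\otimes\psi(\delta_x)\in V_i\otimes\mathrm{End}(W)$. Then for every $x\in\mathcal{C}$ there exists a matrix $b(x)\in\mathrm{End}(W)$ such that for all $n\geq 1$, $$(\phi_1\otimes\cdots\otimes\phi_n)\circ\Delta^{n-1}(x)=\sum_{y_1,\dots,y_n\in B}\mathrm{Tr}\big(b(x)\,\psi(\delta_{y_1})\psi(\delta_{y_2})\cdots\psi(\delta_{y_n})\big)\,\phi_1(y_1)\otimes\cdots\otimes\phi_n(y_n),$$ i.e. $(\phi_1\otimes\cdots\otimes\phi_n)\circ\Delta^{n-1}(x)$ is the matrix product state with tensors $A_1,\dots,A_n$ and boundary matrix $b(x)$.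
   Context: A coalgebra is a vector space $\mathcal{C}$ with a coassociative linear map $\Delta:\mathcal{C}\to\mathcal{C}\otimes\mathcal{C}$, $(\Delta\otimes\mathrm{Id})\Delta=(\mathrm{Id}\otimes\Delta)\Delta$, and a counit $\epsilon\in\mathcal{C}^*$ with $(\epsilon\otimes\mathrm{Id})\Delta=(\mathrm{Id}\otimes\epsilon)\Delta=\mathrm{Id}$. $\Delta^{n-1}$ denotes the $(n-1)$-fold iterated coproduct $\mathcal{C}\to\mathcal{C}^{\otimes n}$ ($\Delta^0=\mathrm{Id}$). The dual $\mathcal{C}^*$ is an algebra with product $(fg)(x)=(f\otimes g)(\Delta(x))$ and unit $\epsilon$. *)

theory Defs
  imports "HOL-Analysis.Analysis" "HOL-Library.Function_Algebras"
begin

text \<open>Coordinate model. The coalgebra C is the space 'b => complex ('b a finite index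
type, so C is finite-dimensional); C^{tensor k} is modelled by coefficient functions
on lists of length k over 'b (coefficients w.r.t. the standard basis). Each V_i is the
space of functions 'v => complex supported on a finite set S i; the tensor product
V_1 (x) ... (x) V_n is modelled by functions on lists of length n, a pure tensor being
the pointwise product of coordinates.\<close>

definition cscale :: "complex \<Rightarrow> ('i \<Rightarrow> complex) \<Rightarrow> ('i \<Rightarrow> complex)" where
  "cscale c f = (\<lambda>i. c * f i)"

definition mscale :: "complex \<Rightarrow> complex^'w^'w \<Rightarrow> complex^'w^'w" where
  "mscale c M = (\<chi> i j. c * M $ i $ j)"

text \<open>standard basis vector e_d\<close>
definition ind :: "'b \<Rightarrow> ('b \<Rightarrow> complex)" where
  "ind d = (\<lambda>i. if i = d then 1 else 0)"

text \<open>(Delta (x) Id) and (Id (x) Delta) on C (x) C, as maps into C (x) C (x) C\<close>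
definition cop_left :: "(('b \<Rightarrow> complex) \<Rightarrow> ('b \<times> 'b \<Rightarrow> complex)) \<Rightarrow> ('b \<times> 'b \<Rightarrow> complex)
    \<Rightarrow> ('b \<times> 'b \<times> 'b \<Rightarrow> complex)" where
  "cop_left D t = (\<lambda>(a, b, c). \<Sum>d\<in>UNIV. t (d, c) * D (ind d) (a, b))"

definition cop_right :: "(('b \<Rightarrow> complex) \<Rightarrow> ('b \<times> 'b \<Rightarrow> complex)) \<Rightarrow> ('b \<times> 'b \<Rightarrow> complex)
    \<Rightarrow> ('b \<times> 'b \<times> 'b \<Rightarrow> complex)" where
  "cop_right D t = (\<lambda>(a, b, c). \<Sum>d\<in>UNIV. t (a, d) * D (ind d) (b, c))"

definition is_coalgebra :: "(('b::finite \<Rightarrow> complex) \<Rightarrow> ('b \<times> 'b \<Rightarrow> complex))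
    \<Rightarrow> (('b \<Rightarrow> complex) \<Rightarrow> complex) \<Rightarrow> bool" where
  "is_coalgebra D eps \<longleftrightarrow>
     Vector_Spaces.linear cscale cscale D \<and>
     Vector_Spaces.linear cscale (*) eps \<and>
     (\<forall>x. cop_left D (D x) = cop_right D (D x)) \<and>
     (\<forall>x. (\<lambda>c. \<Sum>a\<in>UNIV. eps (ind a) * D x (a, c)) = x) \<and>
     (\<forall>x. (\<lambda>a. \<Sum>c\<in>UNIV. D x (a, c) * eps (ind c)) = x)"

text \<open>iterated coproduct: cop_pow D n x = Delta^n x in C^{tensor (n+1)},
  defined by Delta^(n+1) = (Delta (x) Id^{(x) n}) o Delta^n\<close>
fun cop_pow :: "(('b::finite \<Rightarrow> complex) \<Rightarrow> ('b \<times> 'b \<Rightarrow> complex)) \<Rightarrow> nat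
    \<Rightarrow> ('b \<Rightarrow> complex) \<Rightarrow> ('b list \<Rightarrow> complex)" where
  "cop_pow D 0 x = (\<lambda>w. x (hd w))"
| "cop_pow D (Suc n) x =
     (\<lambda>w. \<Sum>d\<in>UNIV. cop_pow D n x (d # drop 2 w) * D (ind d) (w ! 0, w ! 1))"

text \<open>product in the dual algebra C^*: (f g)(x) = (f (x) g)(Delta x)\<close>
definition dual_mult :: "(('b::finite \<Rightarrow> complex) \<Rightarrow> ('b \<times> 'b \<Rightarrow> complex))
    \<Rightarrow> (('b \<Rightarrow> complex) \<Rightarrow> complex) \<Rightarrow> (('b \<Rightarrow> complex) \<Rightarrow> complex)
    \<Rightarrow> (('b \<Rightarrow> complex) \<Rightarrow> complex)" where
  "dual_mult D f g = (\<lambda>x. \<Sum>(a, b)\<in>UNIV. D x (a, b) * f (ind a) * g (ind b))"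

text \<open>the dual space C^* (linear functionals)\<close>
definition dual_space :: "(('b \<Rightarrow> complex) \<Rightarrow> complex) set" where
  "dual_space = {f. Vector_Spaces.linear cscale (*) f}"

text \<open>injective (unital) representation psi : C^* -> End(W), W = complex^'w\<close>
definition is_injective_rep :: "(('b::finite \<Rightarrow> complex) \<Rightarrow> ('b \<times> 'b \<Rightarrow> complex))
    \<Rightarrow> (('b \<Rightarrow> complex) \<Rightarrow> complex) \<Rightarrow> ((('b \<Rightarrow> complex) \<Rightarrow> complex) \<Rightarrow> complex^'w^'w) \<Rightarrow> bool" where
  "is_injective_rep D eps psi \<longleftrightarrow>
     (\<forall>f\<in>dual_space. \<forall>g\<in>dual_space. psi (\<lambda>x. f x + g x) = psi f + psi g) \<and>
     (\<forall>f\<in>dual_space. \<forall>c. psi (\<lambda>x. c * f x) = mscale c (psi f)) \<and>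
     (\<forall>f\<in>dual_space. \<forall>g\<in>dual_space. psi (dual_mult D f g) = psi f ** psi g) \<and>
     psi eps = mat 1 \<and>
     inj_on psi dual_space"

text \<open>(phi_1 (x) ... (x) phi_n) applied to t in C^{tensor n}\<close>
definition phi_tensor :: "(nat \<Rightarrow> ('b::finite \<Rightarrow> complex) \<Rightarrow> ('v \<Rightarrow> complex)) \<Rightarrow> nat
    \<Rightarrow> ('b list \<Rightarrow> complex) \<Rightarrow> ('v list \<Rightarrow> complex)" where
  "phi_tensor phi n t = (\<lambda>u. \<Sum>w\<in>{w. length w = n}.
       t w * (\<Prod>i<n. phi (Suc i) (ind (w ! i)) (u ! i)))"

text \<open>the matrix product state
  sum_{y_1..y_n in B} Tr(b psi(delta_{y_1}) ... psi(delta_{y_n})) phi_1(y_1) (x) ... (x) phi_n(y_n)\<close>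
definition mps :: "(nat \<Rightarrow> ('b \<Rightarrow> complex) \<Rightarrow> ('v \<Rightarrow> complex)) \<Rightarrow> ('b \<Rightarrow> complex) set
    \<Rightarrow> (('b \<Rightarrow> complex) \<Rightarrow> complex^'w^'w) \<Rightarrow> complex^'w^'w \<Rightarrow> nat \<Rightarrow> ('v list \<Rightarrow> complex)" where
  "mps phi B A bnd n = (\<lambda>u. \<Sum>ys\<in>{ys. set ys \<subseteq> B \<and> length ys = n}.
       trace (bnd ** foldr (\<lambda>y M. A y ** M) ys (mat 1))
       * (\<Prod>i<n. phi (Suc i) (ys ! i) (u ! i)))"

end

theory Submission imports Defs begin

lemma vs_cscale: "vector_space (cscale :: complex \<Rightarrow> ('i \<Rightarrow> complex) \<Rightarrow> _)"
  by unfold_locales (auto simp: cscale_def fun_eq_iff algebra_simps)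

lemma vs_mult: "vector_space ((*) :: complex \<Rightarrow> complex \<Rightarrow> complex)"
  by unfold_locales (auto simp: algebra_simps)

lemma sum_fun_app: "(\<Sum>a\<in>A. f a) i = (\<Sum>a\<in>A. (f a i :: complex))"
  by (induction A rule: infinite_finite_induct) auto

lemma expand_vec: "(x :: 'i::finite \<Rightarrow> complex) = (\<Sum>d\<in>UNIV. cscale (x d) (ind d))"
proof (rule ext)
  fix a
  have "(\<Sum>d\<in>UNIV. x d * (if a = d then 1 else 0)) = (\<Sum>d\<in>UNIV. if a = d then x d else 0)"
    by (rule sum.cong) auto
  then show "x a = (\<Sum>d\<in>UNIV. cscale (x d) (ind d)) a"
    by (simp add: sum_fun_app cscale_def ind_def)
qed

lemma lin_add: "Vector_Spaces.linear s1 s2 f \<Longrightarrow> f (x + y) = f x + f y"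
  by (simp add: Vector_Spaces.linear_iff)
lemma lin_scale: "Vector_Spaces.linear s1 s2 f \<Longrightarrow> f (s1 c x) = s2 c (f x)"
  by (simp add: Vector_Spaces.linear_iff)
lemma lin_sum: "Vector_Spaces.linear s1 s2 f \<Longrightarrow> f (sum g A) = (\<Sum>a\<in>A. f (g a))"
  by (rule module_hom.sum[of s1 s2 f]) (simp add: Vector_Spaces.module_hom_iff_linear)

lemma functional_expand:
  assumes "Vector_Spaces.linear cscale (*) g"
  shows "g (x :: 'i::finite \<Rightarrow> complex) = (\<Sum>d\<in>UNIV. x d * g (ind d))"
proof -
  have "g x = g (\<Sum>d\<in>UNIV. cscale (x d) (ind d))" using expand_vec[of x] by simp
  also have "\<dots> = (\<Sum>d\<in>UNIV. x d * g (ind d))"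
    by (simp add: lin_sum[OF assms] lin_scale[OF assms])
  finally show ?thesis .
qed

lemma list_sum_Suc:
  assumes "finite A"
  shows "sum F {ys. set ys \<subseteq> A \<and> length ys = Suc n} = (\<Sum>a\<in>A. \<Sum>r\<in>{ys. set ys \<subseteq> A \<and> length ys = n}. F (a#r))"
proof -
  have e: "{ys. set ys \<subseteq> A \<and> length ys = Suc n} = (\<lambda>(a,r). a#r) ` (A \<times> {ys. set ys \<subseteq> A \<and> length ys = n})"
    by (auto simp: length_Suc_conv image_iff)
  have i: "inj_on (\<lambda>(a,r). a#r) (A \<times> {ys. set ys \<subseteq> A \<and> length ys = n})"
    by (auto simp: inj_on_def)
  show ?thesis unfolding e sum.reindex[OF i]
    by (simp add: sum.cartesian_product case_prod_beta)
qed

lemma list_sum_Suc_UNIV: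
  "sum F {ys :: 'a::finite list. length ys = Suc n} = (\<Sum>a\<in>UNIV. \<Sum>r\<in>{ys. length ys = n}. F (a#r))"
  using list_sum_Suc[of "UNIV :: 'a set" F n] by simp

lemma prod_sum_lists:
  assumes "finite A"
  shows "(\<Prod>i<n. \<Sum>y\<in>A. f i y) = (\<Sum>ys\<in>{ys. set ys \<subseteq> A \<and> length ys = n}. \<Prod>i<n. (f i (ys!i) :: complex))"
proof (induction n arbitrary: f)
  case 0
  have "{ys. set ys \<subseteq> A \<and> length ys = 0} = {[]}" by auto
  then show ?case by simp
next
  case (Suc n)
  have "(\<Prod>i<Suc n. \<Sum>y\<in>A. f i y) = (\<Sum>y\<in>A. f 0 y) * (\<Prod>i<n. \<Sum>y\<in>A. f (Suc i) y)"
    by (simp add: prod.lessThan_Suc_shift del: prod.lessThan_Suc)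
  also have "\<dots> = (\<Sum>y\<in>A. f 0 y) * (\<Sum>ys\<in>{ys. set ys \<subseteq> A \<and> length ys = n}. \<Prod>i<n. f (Suc i) (ys!i))"
    using Suc.IH by simp
  also have "\<dots> = (\<Sum>a\<in>A. \<Sum>r\<in>{ys. set ys \<subseteq> A \<and> length ys = n}. f 0 a * (\<Prod>i<n. f (Suc i) (r!i)))"
    by (simp add: sum_distrib_left sum_distrib_right) (rule sum.swap)
  also have "\<dots> = (\<Sum>ys\<in>{ys. set ys \<subseteq> A \<and> length ys = Suc n}. \<Prod>i<Suc n. f i (ys!i))"
    by (simp add: list_sum_Suc[OF assms] prod.lessThan_Suc_shift del: prod.lessThan_Suc)
  finally show ?case .
qed

lemma mat_fold: "(M :: complex^'w::finite^'w) ** foldr (\<lambda>y N. A y ** N) ys (mat 1) = foldl (**) M (map A ys)"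
proof (induction ys arbitrary: M)
  case Nil then show ?case by simp
next
  case (Cons a ys)
  have "M ** foldr (\<lambda>y N. A y ** N) (a#ys) (mat 1) = (M ** A a) ** foldr (\<lambda>y N. A y ** N) ys (mat 1)"
    by (simp add: matrix_mul_assoc)
  also have "\<dots> = foldl (**) (M ** A a) (map A ys)" by (rule Cons.IH)
  finally show ?case by simp
qed

lemma sum_UNIV_pair: "(\<Sum>(a,b)\<in>(UNIV::('a::finite \<times> 'c::finite) set). h a b) = (\<Sum>a\<in>UNIV. \<Sum>b\<in>UNIV. (h a b :: complex))"
  by (simp add: sum.cartesian_product[symmetric] UNIV_Times_UNIV[symmetric] del: UNIV_Times_UNIV)

lemma dual_mult_lin:
  assumes D: "Vector_Spaces.linear cscale cscale (D :: ('b::finite \<Rightarrow> complex) \<Rightarrow> ('b \<times> 'b \<Rightarrow> complex))"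
  shows "Vector_Spaces.linear cscale (*) (dual_mult D f g)"
proof -
  have a: "D (x + y) p = D x p + D y p" for x y p using lin_add[OF D, of x y] by simp
  have s: "D (cscale c x) p = c * D x p" for c x p using lin_scale[OF D, of c x] by (simp add: cscale_def)
  show ?thesis
    unfolding Vector_Spaces.linear_iff dual_mult_def
    by (auto simp: vs_cscale vs_mult a s sum.distrib sum_distrib_left algebra_simps case_prod_beta)
qed

lemma T_lemma:
  assumes D: "Vector_Spaces.linear cscale cscale (D :: ('b::finite \<Rightarrow> complex) \<Rightarrow> ('b \<times> 'b \<Rightarrow> complex))"
    and f: "Vector_Spaces.linear cscale (*) f"
  shows "(\<Sum>w\<in>{w::'b list. length w = Suc (length fs)}. cop_pow D (length fs) x w *
            (\<Prod>i<Suc (length fs). ((f#fs)!i) (ind (w!i)))) = foldl (dual_mult D) f fs x"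
  using f
proof (induction fs arbitrary: f)
  case Nil
  have e: "{ys::'b list. length ys = 0} = {[]}" by auto
  show ?case
    by (simp add: list_sum_Suc_UNIV e functional_expand[OF Nil.prems, of x])
next
  case (Cons g fs)
  define n where "n = length fs"
  define P where "P r = (\<Prod>i<n. (fs!i) (ind (r!i)))" for r
  define X where "X a b r d = cop_pow D n x (d#r) * D (ind d) (a,b) * f (ind a) * g (ind b) * P r" for a b r d
  have "(\<Sum>w\<in>{w::'b list. length w = Suc (length (g#fs))}. cop_pow D (length (g#fs)) x w *
            (\<Prod>i<Suc (length (g#fs)). ((f#g#fs)!i) (ind (w!i))))
      = (\<Sum>a\<in>UNIV. \<Sum>b\<in>UNIV. \<Sum>r\<in>{w::'b list. length w = n}. 
           (\<Sum>d\<in>UNIV. cop_pow D n x (d#r) * D (ind d) (a,b)) * (f (ind a) * (g (ind b) * P r)))"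
    by (simp add: list_sum_Suc_UNIV n_def P_def prod.lessThan_Suc_shift del: prod.lessThan_Suc)
  also have "\<dots> = (\<Sum>a\<in>UNIV. \<Sum>b\<in>UNIV. \<Sum>r\<in>{w::'b list. length w = n}. \<Sum>d\<in>UNIV. X a b r d)"
    by (simp add: X_def sum_distrib_right mult.assoc)
  also have "\<dots> = (\<Sum>a\<in>UNIV. \<Sum>b\<in>UNIV. \<Sum>d\<in>UNIV. \<Sum>r\<in>{w::'b list. length w = n}. X a b r d)"
    by (intro sum.cong refl sum.swap)
  also have "\<dots> = (\<Sum>a\<in>UNIV. \<Sum>d\<in>UNIV. \<Sum>b\<in>UNIV. \<Sum>r\<in>{w::'b list. length w = n}. X a b r d)"
    by (intro sum.cong refl sum.swap)
  also have "\<dots> = (\<Sum>d\<in>UNIV. \<Sum>a\<in>UNIV. \<Sum>b\<in>UNIV. \<Sum>r\<in>{w::'b list. length w = n}. X a b r d)"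
    by (rule sum.swap)
  also have "\<dots> = (\<Sum>d\<in>UNIV. \<Sum>a\<in>UNIV. \<Sum>r\<in>{w::'b list. length w = n}. \<Sum>b\<in>UNIV. X a b r d)"
    by (intro sum.cong refl sum.swap)
  also have "\<dots> = (\<Sum>d\<in>UNIV. \<Sum>r\<in>{w::'b list. length w = n}. \<Sum>a\<in>UNIV. \<Sum>b\<in>UNIV. X a b r d)"
    by (intro sum.cong refl sum.swap)
  also have "\<dots> = (\<Sum>d\<in>UNIV. \<Sum>r\<in>{w::'b list. length w = n}. cop_pow D n x (d#r) * (dual_mult D f g (ind d) * P r))"
    by (simp add: X_def dual_mult_def sum_UNIV_pair sum_distrib_left sum_distrib_right mult_ac)
  also have "\<dots> = (\<Sum>w\<in>{w::'b list. length w = Suc (length fs)}. cop_pow D (length fs) x w *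
            (\<Prod>i<Suc (length fs). ((dual_mult D f g # fs)!i) (ind (w!i))))"
    by (simp add: list_sum_Suc_UNIV n_def P_def prod.lessThan_Suc_shift del: prod.lessThan_Suc)
  also have "\<dots> = foldl (dual_mult D) (dual_mult D f g) fs x"
    by (rule Cons.IH[OF dual_mult_lin[OF D]])
  finally show ?case by simp
qed

lemma psi_fold:
  assumes rep: "is_injective_rep D eps psi"
    and D: "Vector_Spaces.linear cscale cscale (D :: ('b::finite \<Rightarrow> complex) \<Rightarrow> ('b \<times> 'b \<Rightarrow> complex))"
  shows "f \<in> dual_space \<Longrightarrow> set fs \<subseteq> dual_space \<Longrightarrow>
     psi (foldl (dual_mult D) f fs) = foldl (**) (psi f) (map psi fs)"
proof (induction fs arbitrary: f)
  case Nil then show ?case by simp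
next
  case (Cons g fs)
  have m: "dual_mult D f g \<in> dual_space" using dual_mult_lin[OF D] by (simp add: dual_space_def)
  have "psi (dual_mult D f g) = psi f ** psi g" using rep Cons.prems by (simp add: is_injective_rep_def)
  with Cons.IH[OF m] Cons.prems show ?case by simp
qed

definition fun_of :: "('b::finite \<Rightarrow> complex) \<Rightarrow> ('b \<Rightarrow> complex) \<Rightarrow> complex" where
  "fun_of c = (\<lambda>y. \<Sum>d\<in>UNIV. c d * y d)"

lemma fun_of_dual: "fun_of c \<in> dual_space"
  unfolding dual_space_def fun_of_def Vector_Spaces.linear_iff
  by (auto simp: vs_cscale vs_mult cscale_def sum.distrib sum_distrib_left algebra_simps)

lemma fun_of_ind: "fun_of c (ind d) = c d"
proof -
  have "(\<Sum>e\<in>UNIV. c e * ind d e) = (\<Sum>e\<in>UNIV. if e = d then c e else 0)"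
    by (rule sum.cong) (auto simp: ind_def)
  then show ?thesis by (simp add: fun_of_def)
qed

lemma boundary:
  fixes psi :: "(('b::finite \<Rightarrow> complex) \<Rightarrow> complex) \<Rightarrow> complex^'w::finite^'w"
  assumes rep: "is_injective_rep D eps psi"
  shows "\<exists>bnd. \<forall>g\<in>dual_space. trace (bnd ** psi g) = g x"
proof -
  have padd: "\<And>f g. f \<in> dual_space \<Longrightarrow> g \<in> dual_space \<Longrightarrow> psi (\<lambda>x. f x + g x) = psi f + psi g"
    and pscale: "\<And>f c. f \<in> dual_space \<Longrightarrow> psi (\<lambda>x. c * f x) = mscale c (psi f)"
    and pinj: "inj_on psi dual_space"
    using rep by (auto simp: is_injective_rep_def)
  define flat :: "complex^'w^'w \<Rightarrow> ('w \<times> 'w \<Rightarrow> complex)" where "flat M = (\<lambda>(i,j). M$i$j)" for M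
  define P where "P c = flat (psi (fun_of c))" for c
  have fo_add: "fun_of (c + c') = (\<lambda>y. fun_of c y + fun_of c' y)" for c c'
    by (auto simp: fun_of_def fun_eq_iff sum.distrib algebra_simps)
  have fo_scale: "fun_of (\<lambda>i. a * c i) = (\<lambda>y. a * fun_of c y)" for a c
    by (auto simp: fun_of_def fun_eq_iff sum_distrib_left cscale_def algebra_simps)
  have Plin: "Vector_Spaces.linear cscale cscale P"
    unfolding Vector_Spaces.linear_iff
  proof (intro conjI allI)
    fix c c' :: "'b \<Rightarrow> complex"
    have "psi (fun_of (c + c')) = psi (fun_of c) + psi (fun_of c')"
      unfolding fo_add by (rule padd[OF fun_of_dual fun_of_dual])
    then show "P (c + c') = P c + P c'"
      by (simp add: P_def flat_def fun_eq_iff)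
  next
    fix a and c :: "'b \<Rightarrow> complex"
    have "psi (fun_of (cscale a c)) = mscale a (psi (fun_of c))"
      unfolding cscale_def fo_scale by (rule pscale[OF fun_of_dual])
    then show "P (cscale a c) = cscale a (P c)"
      by (simp add: P_def flat_def fun_eq_iff mscale_def cscale_def)
  qed (simp_all add: vs_cscale)
  have Pinj: "inj P"
  proof (rule injI)
    fix c c' assume "P c = P c'"
    then have "psi (fun_of c) = psi (fun_of c')"
      by (auto simp: P_def flat_def fun_eq_iff vec_eq_iff)
    then have "fun_of c = fun_of c'" using pinj fun_of_dual by (auto dest: inj_onD)
    then show "c = c'" by (metis fun_of_ind ext)
  qed
  have vsp: "vector_space_pair (cscale :: complex \<Rightarrow> ('b \<Rightarrow> complex) \<Rightarrow> _) (cscale :: complex \<Rightarrow> ('w \<times> 'w \<Rightarrow> complex) \<Rightarrow> _)"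
    by (simp add: vector_space_pair_def vs_cscale)
  obtain G where Glin: "Vector_Spaces.linear cscale cscale G" and GP: "G \<circ> P = id"
    using vector_space_pair.linear_injective_left_inverse[OF vsp Plin Pinj] by blast
  define l where "l m = (\<Sum>d\<in>UNIV. G m d * x d)" for m
  have gadd: "G (m + m') d = G m d + G m' d" for m m' d using lin_add[OF Glin, of m m'] by simp
  have gscale: "G (cscale a m) d = a * G m d" for a m d using lin_scale[OF Glin, of a m] by (simp add: cscale_def)
  have llin: "Vector_Spaces.linear cscale (*) l"
    unfolding Vector_Spaces.linear_iff
    by (auto simp: vs_cscale vs_mult l_def gadd gscale sum.distrib sum_distrib_left algebra_simps)
  define bnd :: "complex^'w^'w" where "bnd = (\<chi> j i. l (ind (i,j)))"
  have "trace (bnd ** psi g) = g x" if g: "g \<in> dual_space" for g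
  proof -
    have glin: "Vector_Spaces.linear cscale (*) g" using g by (simp add: dual_space_def)
    define c where "c d = g (ind d)" for d
    have gfo: "g = fun_of c"
    proof (rule ext)
      fix y show "g y = fun_of c y"
        by (simp add: fun_of_def c_def functional_expand[OF glin, of y] mult.commute)
    qed
    have "l (flat (psi g)) = l (P c)" by (simp add: P_def gfo)
    also have "\<dots> = (\<Sum>d\<in>UNIV. c d * x d)" using GP by (simp add: l_def fun_eq_iff)
    also have "\<dots> = g x" by (simp add: c_def functional_expand[OF glin, of x] mult.commute)
    finally have 1: "l (flat (psi g)) = g x" .
    have "l (flat (psi g)) = (\<Sum>p\<in>UNIV. flat (psi g) p * l (ind p))"
      by (rule functional_expand[OF llin])
    also have "\<dots> = (\<Sum>i\<in>UNIV. \<Sum>j\<in>UNIV. psi g $ i $ j * l (ind (i,j)))"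
      using sum_UNIV_pair[of "\<lambda>i j. psi g $ i $ j * l (ind (i,j))"]
      by (simp add: flat_def case_prod_beta)
    also have "\<dots> = (\<Sum>j\<in>UNIV. \<Sum>i\<in>UNIV. psi g $ i $ j * l (ind (i,j)))"
      by (rule sum.swap)
    also have "\<dots> = (\<Sum>j\<in>UNIV. \<Sum>i\<in>UNIV. bnd $ j $ i * psi g $ i $ j)"
      unfolding bnd_def by (intro sum.cong refl) (simp add: mult.commute)
    also have "\<dots> = trace (bnd ** psi g)"
      unfolding trace_def matrix_matrix_mult_def by simp
    finally show ?thesis using 1 by simp
  qed
  then show ?thesis by blast
qed

lemma module_cscale: "module (cscale :: complex \<Rightarrow> ('i \<Rightarrow> complex) \<Rightarrow> _)"
  using vs_cscale by (simp add: module_iff_vector_space)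

lemma B_finite:
  assumes "module.independent cscale (B :: ('b::finite \<Rightarrow> complex) set)"
  shows "finite B"
proof -
  have "v \<in> module.span cscale (range ind)" for v :: "'b \<Rightarrow> complex"
  proof -
    have "(\<Sum>d\<in>UNIV. cscale (v d) (ind d)) \<in> module.span cscale (range ind)"
      by (intro module.span_sum[OF module_cscale] module.span_scale[OF module_cscale]
          module.span_base[OF module_cscale]) auto
    then show ?thesis using expand_vec[of v] by simp
  qed
  then show ?thesis
    using vector_space.independent_span_bound[OF vs_cscale, of "range ind" B] assms by auto
qed

lemma foldl_dual:
  assumes D: "Vector_Spaces.linear cscale cscale (D :: ('b::finite \<Rightarrow> complex) \<Rightarrow> ('b \<times> 'b \<Rightarrow> complex))"
  shows "f \<in> dual_space \<Longrightarrow> foldl (dual_mult D) f fs \<in> dual_space"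
proof (induction fs arbitrary: f)
  case Nil then show ?case by simp
next
  case (Cons g fs)
  have "dual_mult D f g \<in> dual_space" using dual_mult_lin[OF D] by (simp add: dual_space_def)
  then show ?case using Cons.IH by simp
qed

lemma basis_expand:
  fixes B :: "('b::finite \<Rightarrow> complex) set"
  assumes fin: "finite B" and span: "module.span cscale B = UNIV"
    and dd: "\<And>y. y \<in> B \<Longrightarrow> delta y \<in> dual_space"
    and de: "\<And>y z. y \<in> B \<Longrightarrow> z \<in> B \<Longrightarrow> delta y z = (if y = z then 1 else 0)"
  shows "v = (\<Sum>y\<in>B. cscale (delta y v) y)"
proof -
  have "v \<in> range (\<lambda>u. \<Sum>y\<in>B. cscale (u y) y)"
    using module.span_finite[OF module_cscale fin] span by auto
  then obtain u where u: "v = (\<Sum>y\<in>B. cscale (u y) y)" by auto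
  have "delta z v = u z" if z: "z \<in> B" for z
  proof -
    have lz: "Vector_Spaces.linear cscale (*) (delta z)" using dd[OF z] by (simp add: dual_space_def)
    have "delta z v = (\<Sum>y\<in>B. u y * delta z y)"
      unfolding u by (simp add: lin_sum[OF lz] lin_scale[OF lz])
    also have "\<dots> = (\<Sum>y\<in>B. if y = z then u y else 0)"
      by (rule sum.cong) (auto simp: de z)
    also have "\<dots> = u z" using fin z by simp
    finally show ?thesis .
  qed
  then show ?thesis using u by (metis (no_types, lifting) sum.cong)
qed

theorem theorem3p3:
  fixes Delta :: "('b::finite \<Rightarrow> complex) \<Rightarrow> ('b \<times> 'b \<Rightarrow> complex)"
    and eps :: "('b \<Rightarrow> complex) \<Rightarrow> complex"
    and phi :: "nat \<Rightarrow> ('b \<Rightarrow> complex) \<Rightarrow> ('v \<Rightarrow> complex)"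
    and S :: "nat \<Rightarrow> 'v set"
    and psi :: "(('b \<Rightarrow> complex) \<Rightarrow> complex) \<Rightarrow> complex^'w::finite^'w"
    and B :: "('b \<Rightarrow> complex) set"
    and delta :: "('b \<Rightarrow> complex) \<Rightarrow> (('b \<Rightarrow> complex) \<Rightarrow> complex)"
  assumes coalg: "is_coalgebra Delta eps"
    and phi_lin: "\<And>i. i \<ge> 1 \<Longrightarrow> Vector_Spaces.linear cscale cscale (phi i)"
    and V_fin: "\<And>i. i \<ge> 1 \<Longrightarrow> finite (S i)"
    and phi_range: "\<And>i x v. i \<ge> 1 \<Longrightarrow> v \<notin> S i \<Longrightarrow> phi i x v = 0"
    and rep: "is_injective_rep Delta eps psi"
    and B_indep: "module.independent cscale B"
    and B_span: "module.span cscale B = UNIV"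
    and delta_dual: "\<And>y. y \<in> B \<Longrightarrow> delta y \<in> dual_space"
    and delta_eval: "\<And>y z. y \<in> B \<Longrightarrow> z \<in> B \<Longrightarrow> delta y z = (if y = z then 1 else 0)"
  shows "\<forall>x. \<exists>bnd :: complex^'w^'w. \<forall>n \<ge> 1.
           phi_tensor phi n (cop_pow Delta (n - 1) x) = mps phi B (\<lambda>y. psi (delta y)) bnd n"
proof
  fix x
  have D: "Vector_Spaces.linear cscale cscale Delta" using coalg by (simp add: is_coalgebra_def)
  have fin: "finite B" by (rule B_finite[OF B_indep])
  obtain bnd :: "complex^'w^'w" where bnd: "\<And>g. g \<in> dual_space \<Longrightarrow> trace (bnd ** psi g) = g x"
    using boundary[OF rep, of x] by blast
  define A where "A y = psi (delta y)" for y
  define LB where "LB k = {ys. set ys \<subseteq> B \<and> length ys = k}" for k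
  have phi_exp: "phi (Suc i) (ind d) v = (\<Sum>y\<in>B. delta y (ind d) * phi (Suc i) y v)" for i d v
  proof -
    have l: "Vector_Spaces.linear cscale cscale (phi (Suc i))" using phi_lin by simp
    have "phi (Suc i) (ind d) = phi (Suc i) (\<Sum>y\<in>B. cscale (delta y (ind d)) y)"
      using basis_expand[OF fin B_span delta_dual delta_eval, of "ind d"] by simp
    also have "\<dots> = (\<Sum>y\<in>B. cscale (delta y (ind d)) (phi (Suc i) y))"
      by (simp add: lin_sum[OF l] lin_scale[OF l])
    finally show ?thesis by (simp add: sum_fun_app cscale_def)
  qed
  have trace_eq: "(\<Sum>w\<in>{w::'b list. length w = Suc m}. cop_pow Delta m x w *
        (\<Prod>i<Suc m. delta (ys!i) (ind (w!i))))
       = trace (bnd ** foldr (\<lambda>y M. A y ** M) ys (mat 1))" if ys: "ys \<in> LB (Suc m)" for ys m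
  proof -
    obtain y ys' where yy: "ys = y # ys'" and len: "length ys' = m" and yB: "y \<in> B" and ysB: "set ys' \<subseteq> B"
      using ys unfolding LB_def by (cases ys) auto
    have fy: "delta y \<in> dual_space" using delta_dual yB by simp
    have fys: "set (map delta ys') \<subseteq> dual_space" using delta_dual ysB by auto
    have "(\<Sum>w\<in>{w::'b list. length w = Suc m}. cop_pow Delta m x w *
        (\<Prod>i<Suc m. delta (ys!i) (ind (w!i))))
       = (\<Sum>w\<in>{w::'b list. length w = Suc (length (map delta ys'))}. cop_pow Delta (length (map delta ys')) x w *
        (\<Prod>i<Suc (length (map delta ys')). ((delta y # map delta ys')!i) (ind (w!i))))"
    proof -
      have "(delta y # map delta ys')!i = delta (ys!i)" if "i < Suc m" for i
        using that len by (cases i) (auto simp: yy)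
      then show ?thesis using len by (intro sum.cong refl arg_cong2[where f="(*)"] prod.cong) auto
    qed
    also have "\<dots> = foldl (dual_mult Delta) (delta y) (map delta ys') x"
      by (rule T_lemma[OF D]) (use fy in \<open>simp add: dual_space_def\<close>)
    also have "\<dots> = trace (bnd ** psi (foldl (dual_mult Delta) (delta y) (map delta ys')))"
      by (rule bnd[OF foldl_dual[OF D fy], symmetric])
    also have "psi (foldl (dual_mult Delta) (delta y) (map delta ys')) = foldl (**) (A y) (map A ys')"
    proof -
      have "A = (\<lambda>y. psi (delta y))" by (simp add: A_def fun_eq_iff)
      then show ?thesis using psi_fold[OF rep D fy fys] by (simp add: o_def)
    qed
    also have "\<dots> = A y ** foldr (\<lambda>y M. A y ** M) ys' (mat 1)"
      by (rule mat_fold[symmetric])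
    finally show ?thesis by (simp add: yy)
  qed
  show "\<exists>bnd :: complex^'w^'w. \<forall>n \<ge> 1.
           phi_tensor phi n (cop_pow Delta (n - 1) x) = mps phi B (\<lambda>y. psi (delta y)) bnd n"
  proof (intro exI allI impI)
    fix n :: nat assume "n \<ge> 1"
    then obtain m where n: "n = Suc m" by (cases n) auto
    show "phi_tensor phi n (cop_pow Delta (n - 1) x) = mps phi B (\<lambda>y. psi (delta y)) bnd n"
    proof (rule ext)
      fix u :: "'v list"
      define Pd where "Pd w ys = (\<Prod>i<Suc m. delta (ys!i) (ind (w!i)))" for w :: "'b list" and ys :: "('b \<Rightarrow> complex) list"
      define Pp where "Pp ys = (\<Prod>i<Suc m. phi (Suc i) (ys!i) (u!i))" for ys
      have step1: "(\<Prod>i<Suc m. phi (Suc i) (ind (w!i)) (u!i)) = (\<Sum>ys\<in>LB (Suc m). Pd w ys * Pp ys)" for w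
      proof -
        have "(\<Prod>i<Suc m. phi (Suc i) (ind (w!i)) (u!i))
            = (\<Prod>i<Suc m. \<Sum>y\<in>B. delta y (ind (w!i)) * phi (Suc i) y (u!i))"
          by (simp add: phi_exp)
        also have "\<dots> = (\<Sum>ys\<in>LB (Suc m). \<Prod>i<Suc m. delta (ys!i) (ind (w!i)) * phi (Suc i) (ys!i) (u!i))"
          unfolding LB_def by (rule prod_sum_lists[OF fin])
        also have "\<dots> = (\<Sum>ys\<in>LB (Suc m). Pd w ys * Pp ys)"
          by (simp add: Pd_def Pp_def prod.distrib)
        finally show ?thesis .
      qed
      have "phi_tensor phi n (cop_pow Delta (n - 1) x) u
          = (\<Sum>w\<in>{w::'b list. length w = Suc m}. cop_pow Delta m x w * (\<Sum>ys\<in>LB (Suc m). Pd w ys * Pp ys))"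
        unfolding phi_tensor_def n step1[symmetric] by simp
      also have "\<dots> = (\<Sum>w\<in>{w::'b list. length w = Suc m}. \<Sum>ys\<in>LB (Suc m). cop_pow Delta m x w * Pd w ys * Pp ys)"
        by (simp add: sum_distrib_left mult.assoc)
      also have "\<dots> = (\<Sum>ys\<in>LB (Suc m). \<Sum>w\<in>{w::'b list. length w = Suc m}. cop_pow Delta m x w * Pd w ys * Pp ys)"
        by (rule sum.swap)
      also have "\<dots> = (\<Sum>ys\<in>LB (Suc m). (\<Sum>w\<in>{w::'b list. length w = Suc m}. cop_pow Delta m x w * Pd w ys) * Pp ys)"
        by (simp add: sum_distrib_right)
      also have "\<dots> = (\<Sum>ys\<in>LB (Suc m). trace (bnd ** foldr (\<lambda>y M. A y ** M) ys (mat 1)) * Pp ys)"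
        by (intro sum.cong refl arg_cong2[where f="(*)"]) (unfold Pd_def, rule trace_eq)
      also have "\<dots> = mps phi B (\<lambda>y. psi (delta y)) bnd n u"
        by (simp add: mps_def n LB_def Pp_def A_def)
      finally show "phi_tensor phi n (cop_pow Delta (n - 1) x) u = mps phi B (\<lambda>y. psi (delta y)) bnd n u" .
    qed
  qed
qed

end
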